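(* Let $\Gamma$ be a finitely generated discrete group with right-invariant word metric $d$. For a bounded linear map $T:C^*_r(\Gamma)\to\mathcal{B}(\ell^2(\Gamma))$ define $u_T:\Gamma\times\Gamma\to\mathbb{C}$ by $u_T(s,t)=\langle\delta_s, T(\lambda_{st^{-1}})\delta_t\rangle$. Then $u_T\in\ell^\infty(\Gamma\times\Gamma)$ and: (i) if $T$ is unital and completely positive, then $u_T$ is positive definite; (ii) if $T$ has finite rank and takes values in $UC^*(\Gamma)$, then $u_T\in C_0(\Gamma\times\Gamma;\Delta)$; (iii) if $(T_\lambda)$ is a net of bounded linear maps $C^*_r(\Gamma)\to\mathcal{B}(\ell^2(\Gamma))$ with $\|T_\lambda(x)-x\|\to0$ for all $x\in C^*_r(\Gamma)$, then $u_{T_\lambda}\to1$ uniformly on $\{(s,t):d(s,t)<R\}$ for every $R>0$.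
   Context: Fix a finite symmetric generating set of $\Gamma$ with word length $l$, and let $d(s,t)=l(st^{-1})$. $\lambda_t\delta_r=\delta_{tr}$ is the left regular representation on $\ell^2(\Gamma)$, $\delta_r$ the indicator of $r$, and $C^*_r(\Gamma)$ the norm closure of the span of the $\lambda_t$. $UC^*(\Gamma)$ is the norm closure in $\mathcal{B}(\ell^2(\Gamma))$ of the operators given by bounded matrices $A(s,t)$ vanishing when $d(s,t)>R$ for some $R$ (acting by $(A\xi)(s)=\sum_rA(s,r)\xi(r)$). A function $f$ on $\Gamma\times\Gamma$ is positive definite if $\sum_{i,j}\overline{z_i}f(s_i,s_j)z_j\ge0$ for all finite families $s_i\in\Gamma$, $z_i\in\mathbb{C}$. $C_0(\Gamma\times\Gamma;\Delta)$ is the set of bounded $f$ on $\Gamma\times\Gamma$ such that for every $\epsilon>0$ there is $R>0$ with $|f(s,t)|<\epsilon$ whenever $d(s,t)>R$. *)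

theory Defs
  imports "HOL-Analysis.Analysis"
begin

text \<open>The group \<Gamma> is a type of class group_add (written additively, not necessarily
commutative): s t^{-1} is written s - t = s + (- t), the identity is 0.
Operators on l^2(\<Gamma>) are represented as maps ('g => complex) => ('g => complex),
only their behaviour on the subset l2 of square-summable functions matters.\<close>

type_synonym 'g op = "('g \<Rightarrow> complex) \<Rightarrow> ('g \<Rightarrow> complex)"

definition generating_set :: "'g::group_add set \<Rightarrow> bool" where
  "generating_set S \<longleftrightarrow> finite S \<and> uminus ` S = S \<and>
     (\<forall>g. \<exists>xs. set xs \<subseteq> S \<and> sum_list xs = g)"

definition word_length :: "'g::group_add set \<Rightarrow> 'g \<Rightarrow> nat" where
  "word_length S g = (LEAST n. \<exists>xs. length xs = n \<and> set xs \<subseteq> S \<and> sum_list xs = g)"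

definition word_dist :: "'g::group_add set \<Rightarrow> 'g \<Rightarrow> 'g \<Rightarrow> nat" where
  "word_dist S s t = word_length S (s - t)"

definition l2 :: "('g \<Rightarrow> complex) set" where
  "l2 = {f. (\<lambda>x. (cmod (f x))\<^sup>2) summable_on UNIV}"

definition l2_norm :: "('g \<Rightarrow> complex) \<Rightarrow> real" where
  "l2_norm f = sqrt (\<Sum>\<^sub>\<infinity>x. (cmod (f x))\<^sup>2)"

definition l2_inner :: "('g \<Rightarrow> complex) \<Rightarrow> ('g \<Rightarrow> complex) \<Rightarrow> complex" where
  "l2_inner f g = (\<Sum>\<^sub>\<infinity>x. cnj (f x) * g x)"

definition delta :: "'g \<Rightarrow> 'g \<Rightarrow> complex" where
  "delta s = (\<lambda>r. if r = s then 1 else 0)"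

definition bounded_op :: "'g op \<Rightarrow> bool" where
  "bounded_op A \<longleftrightarrow> (\<forall>f\<in>l2. A f \<in> l2) \<and>
     (\<forall>f\<in>l2. \<forall>g\<in>l2. \<forall>c. A (\<lambda>x. f x + c * g x) = (\<lambda>x. A f x + c * A g x)) \<and>
     (\<exists>K. \<forall>f\<in>l2. l2_norm (A f) \<le> K * l2_norm f)"

definition op_norm :: "'g op \<Rightarrow> real" where
  "op_norm A = Sup {l2_norm (A f) | f. f \<in> l2 \<and> l2_norm f \<le> 1}"

definition op_diff :: "'g op \<Rightarrow> 'g op \<Rightarrow> 'g op" where
  "op_diff A B = (\<lambda>f x. A f x - B f x)"

text \<open>Left regular representation: (lambda_t xi)(x) = xi(t^{-1} x), so lambda_t delta_r = delta_{tr}.\<close>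
definition lam :: "'g::group_add \<Rightarrow> 'g op" where
  "lam t = (\<lambda>f x. f (- t + x))"

definition Cr :: "'g::group_add op set" where
  "Cr = {A. bounded_op A \<and> (\<forall>\<epsilon>>0. \<exists>F c. finite F \<and>
      op_norm (op_diff A (\<lambda>f x. \<Sum>t\<in>F. c t * lam t f x)) < \<epsilon>)}"

definition mat_op :: "('g \<Rightarrow> 'g \<Rightarrow> complex) \<Rightarrow> 'g op" where
  "mat_op M = (\<lambda>\<xi> s. \<Sum>\<^sub>\<infinity>r. M s r * \<xi> r)"

definition UC :: "'g::group_add set \<Rightarrow> 'g op set" where
  "UC S = {A. bounded_op A \<and> (\<forall>\<epsilon>>0. \<exists>M R C.
      (\<forall>s t. cmod (M s t) \<le> C) \<and> (\<forall>s t. real (word_dist S s t) > R \<longrightarrow> M s t = 0) \<and>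
      op_norm (op_diff A (mat_op M)) < \<epsilon>)}"

definition bounded_linear_Cr :: "('g::group_add op \<Rightarrow> 'g op) \<Rightarrow> bool" where
  "bounded_linear_Cr T \<longleftrightarrow> (\<forall>x\<in>Cr. bounded_op (T x)) \<and>
     (\<forall>x\<in>Cr. \<forall>y\<in>Cr. \<forall>c. \<forall>f\<in>l2.
        T (\<lambda>g z. x g z + c * y g z) f = (\<lambda>z. T x f z + c * T y f z)) \<and>
     (\<exists>K. \<forall>x\<in>Cr. op_norm (T x) \<le> K * op_norm x)"

definition cnonneg :: "complex \<Rightarrow> bool" where
  "cnonneg z \<longleftrightarrow> Im z = 0 \<and> 0 \<le> Re z"

definition op_matrix_pos :: "nat \<Rightarrow> (nat \<Rightarrow> nat \<Rightarrow> 'g op) \<Rightarrow> bool" where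
  "op_matrix_pos n x \<longleftrightarrow> (\<forall>\<xi>. (\<forall>i<n. \<xi> i \<in> l2) \<longrightarrow>
      cnonneg (\<Sum>i<n. \<Sum>j<n. l2_inner (\<xi> i) (x i j (\<xi> j))))"

definition completely_positive :: "('g::group_add op \<Rightarrow> 'g op) \<Rightarrow> bool" where
  "completely_positive T \<longleftrightarrow> (\<forall>n x. (\<forall>i<n. \<forall>j<n. x i j \<in> Cr) \<and> op_matrix_pos n x
      \<longrightarrow> op_matrix_pos n (\<lambda>i j. T (x i j)))"

definition unital :: "('g::group_add op \<Rightarrow> 'g op) \<Rightarrow> bool" where
  "unital T \<longleftrightarrow> (\<forall>f\<in>l2. T (\<lambda>f. f) f = f)"

definition finite_rank :: "('g::group_add op \<Rightarrow> 'g op) \<Rightarrow> bool" where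
  "finite_rank T \<longleftrightarrow> (\<exists>k (B :: nat \<Rightarrow> 'g op). \<forall>x\<in>Cr. \<exists>c. \<forall>f\<in>l2.
      T x f = (\<lambda>z. \<Sum>i<k. c i * B i f z))"

definition u_T :: "('g::group_add op \<Rightarrow> 'g op) \<Rightarrow> 'g \<Rightarrow> 'g \<Rightarrow> complex" where
  "u_T T s t = l2_inner (delta s) (T (lam (s - t)) (delta t))"

definition positive_definite :: "('g \<Rightarrow> 'g \<Rightarrow> complex) \<Rightarrow> bool" where
  "positive_definite u \<longleftrightarrow> (\<forall>n (s :: nat \<Rightarrow> 'g) (z :: nat \<Rightarrow> complex).
      cnonneg (\<Sum>i<n. \<Sum>j<n. cnj (z i) * u (s i) (s j) * z j))"

definition bounded_fun2 :: "('g \<Rightarrow> 'g \<Rightarrow> complex) \<Rightarrow> bool" where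
  "bounded_fun2 u \<longleftrightarrow> (\<exists>C. \<forall>s t. cmod (u s t) \<le> C)"

definition C0_Delta :: "'g::group_add set \<Rightarrow> ('g \<Rightarrow> 'g \<Rightarrow> complex) \<Rightarrow> bool" where
  "C0_Delta S u \<longleftrightarrow> bounded_fun2 u \<and>
     (\<forall>\<epsilon>>0. \<exists>R>0. \<forall>s t. real (word_dist S s t) > R \<longrightarrow> cmod (u s t) < \<epsilon>)"

definition directed_set :: "('i \<Rightarrow> 'i \<Rightarrow> bool) \<Rightarrow> bool" where
  "directed_set le \<longleftrightarrow> (\<forall>a. le a a) \<and> (\<forall>a b c. le a b \<longrightarrow> le b c \<longrightarrow> le a c) \<and>
     (\<forall>a b. \<exists>c. le a c \<and> le b c)"

end

theory Submission
  imports Defs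
begin


lemma infsum_single_gen:
  fixes f :: "'a \<Rightarrow> 'b::{comm_monoid_add,t2_space}"
  assumes "\<And>x. x \<noteq> s \<Longrightarrow> f x = 0"
  shows "infsum f UNIV = f s"
proof -
  have "infsum f UNIV = infsum f {s}"
    by (rule infsum_cong_neutral) (use assms in auto)
  then show ?thesis by simp
qed

lemma summable_single_gen:
  fixes f :: "'a \<Rightarrow> 'b::{comm_monoid_add,t2_space}"
  assumes "\<And>x. x \<noteq> s \<Longrightarrow> f x = 0"
  shows "f summable_on UNIV"
proof -
  have "f summable_on UNIV \<longleftrightarrow> f summable_on {s}"
    by (rule summable_on_cong_neutral) (use assms in auto)
  then show ?thesis by simp
qed

lemma inner_delta: "l2_inner (delta s) h = h s"
  unfolding l2_inner_def
  by (subst infsum_single_gen[where s=s]) (auto simp: delta_def)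

lemma inner_sdelta: "l2_inner (\<lambda>r. c * delta s r) h = cnj c * h s"
  unfolding l2_inner_def
  by (subst infsum_single_gen[where s=s]) (auto simp: delta_def)

lemma mat_op_delta: "mat_op M (delta t) s = M s t"
  unfolding mat_op_def
  by (subst infsum_single_gen[where s=t]) (auto simp: delta_def)

lemma l2_norm_nonneg: "0 \<le> l2_norm f"
  unfolding l2_norm_def by (simp add: infsum_nonneg)

lemma l2_norm_sq: "(l2_norm f)^2 = (\<Sum>\<^sub>\<infinity>x. (cmod (f x))\<^sup>2)"
  unfolding l2_norm_def by (simp add: infsum_nonneg)

lemma point_le_norm:
  assumes "f \<in> l2" shows "cmod (f s) \<le> l2_norm f"
proof -
  have "(cmod (f s))^2 = (\<Sum>\<^sub>\<infinity>x\<in>{s}. (cmod (f x))\<^sup>2)" by simp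
  also have "\<dots> \<le> (\<Sum>\<^sub>\<infinity>x. (cmod (f x))\<^sup>2)"
    by (rule infsum_mono_neutral) (use assms in \<open>auto simp: l2_def\<close>)
  finally show ?thesis unfolding l2_norm_def by (simp add: real_le_rsqrt)
qed

lemma fin_supp_l2:
  assumes "\<And>x. x \<noteq> s \<Longrightarrow> f x = 0" shows "f \<in> l2"
  unfolding l2_def by (auto intro!: summable_single_gen[where s=s] simp: assms)

lemma delta_l2: "delta t \<in> l2"
  by (rule fin_supp_l2[where s=t]) (auto simp: delta_def)

lemma delta_norm: "l2_norm (delta t) = 1"
  unfolding l2_norm_def
  by (subst infsum_single_gen[where s=t]) (auto simp: delta_def)

lemma zero_l2: "(\<lambda>x. 0) \<in> l2" by (rule fin_supp_l2) auto

lemma zero_norm: "l2_norm (\<lambda>x. 0) = 0" by (simp add: l2_norm_def)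

definition op_ok :: "'g op \<Rightarrow> bool" where
  "op_ok D \<longleftrightarrow> (\<forall>f\<in>l2. D f \<in> l2) \<and> (\<exists>K. \<forall>f\<in>l2. l2_norm f \<le> 1 \<longrightarrow> l2_norm (D f) \<le> K)"

lemma op_ok_norm:
  assumes "op_ok D" "f \<in> l2" "l2_norm f \<le> 1"
  shows "l2_norm (D f) \<le> op_norm D"
  unfolding op_norm_def
proof (rule cSup_upper)
  from assms(1) obtain K where K: "\<forall>f\<in>l2. l2_norm f \<le> 1 \<longrightarrow> l2_norm (D f) \<le> K"
    unfolding op_ok_def by blast
  show "bdd_above {l2_norm (D f) |f. f \<in> l2 \<and> l2_norm f \<le> 1}"
    by (rule bdd_aboveI[where M=K]) (use K in blast)
qed (use assms in auto)

lemma op_norm_nonneg: "op_ok D \<Longrightarrow> 0 \<le> op_norm D"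
proof -
  assume a: "op_ok D"
  have "l2_norm (D (\<lambda>x. 0)) \<le> op_norm D" by (rule op_ok_norm) (auto simp: a zero_l2 zero_norm)
  then show ?thesis using l2_norm_nonneg[of "D (\<lambda>x. 0)"] by linarith
qed

lemma entry_le:
  assumes "op_ok D" shows "cmod (D (delta t) s) \<le> op_norm D"
proof -
  have "\<forall>f\<in>l2. D f \<in> l2" using assms unfolding op_ok_def by (rule conjunct1)
  then have "D (delta t) \<in> l2" by (rule bspec[OF _ delta_l2])
  then have "cmod (D (delta t) s) \<le> l2_norm (D (delta t))" by (rule point_le_norm)
  also have "\<dots> \<le> op_norm D" by (rule op_ok_norm[OF assms delta_l2]) (simp add: delta_norm)
  finally show ?thesis .
qed

lemma bounded_op_ok:
  assumes "bounded_op A" shows "op_ok A"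
proof -
  obtain K where K: "\<forall>f\<in>l2. l2_norm (A f) \<le> K * l2_norm f" and l: "\<forall>f\<in>l2. A f \<in> l2"
    using assms unfolding bounded_op_def by blast
  have "l2_norm (A f) \<le> max K 0" if "f \<in> l2" "l2_norm f \<le> 1" for f
  proof -
    have "l2_norm (A f) \<le> K * l2_norm f" using K that by blast
    also have "\<dots> \<le> max K 0 * l2_norm f" by (rule mult_right_mono) (auto simp: l2_norm_nonneg)
    also have "\<dots> \<le> max K 0 * 1" by (rule mult_left_mono) (use that in auto)
    finally show ?thesis by simp
  qed
  then show ?thesis unfolding op_ok_def using l by blast
qed

lemma bounded_op_zero:
  assumes "bounded_op A" shows "A (\<lambda>x. 0) = (\<lambda>x. 0)"
proof -
  have lin: "\<forall>f\<in>l2. \<forall>g\<in>l2. \<forall>c. A (\<lambda>x. f x + c * g x) = (\<lambda>x. A f x + c * A g x)"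
    using assms unfolding bounded_op_def by blast
  have e0: "A (\<lambda>x. (0::complex) + 1 * 0) = (\<lambda>x. A (\<lambda>x. 0) x + 1 * A (\<lambda>x. 0) x)"
    by (rule lin[rule_format, OF zero_l2 zero_l2])
  have z: "(\<lambda>x::'a. (0::complex) + 1 * 0) = (\<lambda>x. 0)" by simp
  have e: "A (\<lambda>x. 0) = (\<lambda>x. A (\<lambda>x. 0) x + 1 * A (\<lambda>x. 0) x)" using e0 unfolding z .
  have "A (\<lambda>x. 0) y = 0" for y
  proof -
    have "A (\<lambda>x. 0) y = A (\<lambda>x. 0) y + 1 * A (\<lambda>x. 0) y"
      using e by (rule arg_cong[where f="\<lambda>h. h y"])
    then show ?thesis by (metis add_cancel_right_right mult_1)
  qed
  then show ?thesis by (intro ext)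
qed

lemma bounded_op_scale:
  assumes "bounded_op A" "g \<in> l2" shows "A (\<lambda>x. c * g x) = (\<lambda>x. c * A g x)"
proof -
  have lin: "\<forall>f\<in>l2. \<forall>g\<in>l2. \<forall>c. A (\<lambda>x. f x + c * g x) = (\<lambda>x. A f x + c * A g x)"
    using assms unfolding bounded_op_def by blast
  have "A (\<lambda>x. 0 + c * g x) = (\<lambda>x. A (\<lambda>x. 0) x + c * A g x)"
    using lin[rule_format, OF zero_l2 assms(2), of c] by simp
  then show ?thesis using bounded_op_zero[OF assms(1)] by simp
qed

lemma infsum_of_real_gen:
  "infsum (\<lambda>x. complex_of_real (r x)) A = of_real (infsum r A)"
proof (cases "r summable_on A")
  case True
  then have "(r has_sum infsum r A) A" by (simp add: has_sum_infsum)
  then show ?thesis using has_sum_of_real[where f=r and S="infsum r A" and A=A] infsumI by blast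
next
  case False
  then have "\<not> (\<lambda>x. complex_of_real (r x)) summable_on A"
    using summable_on_Re[of "\<lambda>x. complex_of_real (r x)" A] by auto
  then show ?thesis using False by (simp add: infsum_not_exists)
qed

lemma nonneg_summable_le:
  fixes f g :: "'a \<Rightarrow> real"
  assumes "g summable_on A" "\<And>x. x \<in> A \<Longrightarrow> 0 \<le> f x" "\<And>x. x \<in> A \<Longrightarrow> f x \<le> g x"
  shows "f summable_on A"
proof (rule nonneg_bdd_above_summable_on)
  show "bdd_above (sum f ` {F. F \<subseteq> A \<and> finite F})"
  proof (rule bdd_aboveI2)
    fix F assume F: "F \<in> {F. F \<subseteq> A \<and> finite F}"
    have "sum f F \<le> sum g F" using F assms by (intro sum_mono) auto
    also have "\<dots> \<le> infsum g A"
    proof (rule finite_sum_le_infsum)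
      show "g summable_on A" by (rule assms(1))
      show "finite F" "F \<subseteq> A" using F by auto
      fix x assume "x \<in> A - F"
      then have "x \<in> A" by blast
      then show "0 \<le> g x" using assms(2)[of x] assms(3)[of x] by linarith
    qed
    finally show "sum f F \<le> infsum g A" .
  qed
qed (use assms in auto)



lemma sq_ineq: "(cmod (a + c * b))^2 \<le> 2 * (cmod a)^2 + 2 * (cmod c)^2 * (cmod b)^2"
proof -
  have t: "cmod (a + c * b) \<le> cmod a + cmod c * cmod b"
    using norm_triangle_ineq[of a "c*b"] by (simp add: norm_mult)
  have "(cmod (a + c * b))^2 \<le> (cmod a + cmod c * cmod b)^2"
    by (rule power_mono[OF t]) simp
  also have "\<dots> \<le> 2 * (cmod a)^2 + 2 * (cmod c * cmod b)^2"
    using power2_diff[of "cmod a" "cmod c * cmod b"] power2_sum[of "cmod a" "cmod c * cmod b"]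
      zero_le_power2[of "cmod a - cmod c * cmod b"] by linarith
  finally show ?thesis by (simp add: power_mult_distrib)
qed

lemma l2_lin:
  assumes f: "f \<in> l2" and g: "g \<in> l2"
  shows "(\<lambda>x. f x + c * g x) \<in> l2"
    and "(l2_norm (\<lambda>x. f x + c * g x))^2 \<le> 2 * (l2_norm f)^2 + 2 * (cmod c)^2 * (l2_norm g)^2"
proof -
  let ?h = "\<lambda>x. 2 * (cmod (f x))^2 + 2 * (cmod c)^2 * (cmod (g x))^2"
  have sf: "(\<lambda>x. (cmod (f x))^2) summable_on UNIV" using f by (simp add: l2_def)
  have sg: "(\<lambda>x. (cmod (g x))^2) summable_on UNIV" using g by (simp add: l2_def)
  have sh: "?h summable_on UNIV"
    by (intro summable_on_add summable_on_cmult_right sf sg)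
  have s: "(\<lambda>x. (cmod (f x + c * g x))^2) summable_on UNIV"
    by (rule nonneg_summable_le[OF sh]) (auto simp: sq_ineq)
  then show "(\<lambda>x. f x + c * g x) \<in> l2" by (simp add: l2_def)
  have "(l2_norm (\<lambda>x. f x + c * g x))^2 = (\<Sum>\<^sub>\<infinity>x. (cmod (f x + c * g x))^2)"
    by (rule l2_norm_sq)
  also have "\<dots> \<le> infsum ?h UNIV"
    by (rule infsum_mono[OF s sh]) (simp add: sq_ineq)
  also have "infsum ?h UNIV = 2 * (\<Sum>\<^sub>\<infinity>x. (cmod (f x))^2) + 2 * (cmod c)^2 * (\<Sum>\<^sub>\<infinity>x. (cmod (g x))^2)"
    by (subst infsum_add) (auto intro!: summable_on_cmult_right sf sg simp: infsum_cmult_right sf sg)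
  also have "\<dots> = 2 * (l2_norm f)^2 + 2 * (cmod c)^2 * (l2_norm g)^2"
    by (simp add: l2_norm_sq)
  finally show "(l2_norm (\<lambda>x. f x + c * g x))^2 \<le> 2 * (l2_norm f)^2 + 2 * (cmod c)^2 * (l2_norm g)^2" .
qed

lemma op_ok_diff:
  assumes A: "op_ok A" and B: "op_ok B"
  shows "op_ok (op_diff A B)"
proof -
  obtain KA where KA: "\<forall>f\<in>l2. l2_norm f \<le> 1 \<longrightarrow> l2_norm (A f) \<le> KA" and la: "\<forall>f\<in>l2. A f \<in> l2"
    using A unfolding op_ok_def by blast
  obtain KB where KB: "\<forall>f\<in>l2. l2_norm f \<le> 1 \<longrightarrow> l2_norm (B f) \<le> KB" and lb: "\<forall>f\<in>l2. B f \<in> l2"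
    using B unfolding op_ok_def by blast
  have eq: "op_diff A B f = (\<lambda>x. A f x + (-1) * B f x)" for f
    by (simp add: op_diff_def)
  have l: "op_diff A B f \<in> l2" if "f \<in> l2" for f
    unfolding eq by (rule l2_lin(1)) (use la lb that in auto)
  have bnd: "l2_norm (op_diff A B f) \<le> sqrt (2 * KA^2 + 2 * KB^2)" if f: "f \<in> l2" "l2_norm f \<le> 1" for f
  proof -
    have af: "A f \<in> l2" "B f \<in> l2" using la lb f by auto
    have a1: "l2_norm (A f) \<le> KA" "l2_norm (B f) \<le> KB" using KA KB f by auto
    have "(l2_norm (A f))^2 \<le> KA^2" by (rule power_mono[OF a1(1) l2_norm_nonneg])
    moreover have "(l2_norm (B f))^2 \<le> KB^2" by (rule power_mono[OF a1(2) l2_norm_nonneg])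
    moreover have "(l2_norm (op_diff A B f))^2 \<le> 2 * (l2_norm (A f))^2 + 2 * (cmod (-1::complex))^2 * (l2_norm (B f))^2"
      unfolding eq by (rule l2_lin(2)[OF af])
    ultimately have "(l2_norm (op_diff A B f))^2 \<le> 2 * KA^2 + 2 * KB^2" by simp
    then show ?thesis using l2_norm_nonneg by (simp add: real_le_rsqrt)
  qed
  show ?thesis unfolding op_ok_def
    by (intro conjI ballI exI[of _ "sqrt (2 * KA^2 + 2 * KB^2)"] impI l bnd)
qed

lemma bij_shift: "bij_betw (\<lambda>x. (a::'g::group_add) + x) UNIV UNIV"
  unfolding bij_betw_def
proof
  show "inj (\<lambda>x. a + x)" by (rule injI) simp
  show "range (\<lambda>x. a + x) = UNIV"
  proof (rule surj_def[THEN iffD2, rule_format])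
    fix y show "\<exists>x. y = a + x" by (rule exI[of _ "- a + y"]) (simp add: add.assoc[symmetric])
  qed
qed

lemma shift_summable:
  "(\<lambda>x. F ((a::'g::group_add) + x)) summable_on UNIV \<longleftrightarrow> F summable_on UNIV"
  by (rule summable_on_reindex_bij_betw[OF bij_shift])

lemma shift_infsum:
  "infsum (\<lambda>x. F ((a::'g::group_add) + x)) UNIV = infsum F UNIV"
  by (rule infsum_reindex_bij_betw[OF bij_shift])

lemma lam_l2:
  assumes "f \<in> l2" shows "lam g f \<in> l2" and "l2_norm (lam g f) = l2_norm f"
proof -
  show "lam g f \<in> l2"
    using assms shift_summable[of "\<lambda>x. (cmod (f x))^2" "-g"] by (simp add: l2_def lam_def)
  show "l2_norm (lam g f) = l2_norm f"
    using shift_infsum[of "\<lambda>x. (cmod (f x))^2" "-g"] by (simp add: l2_norm_def lam_def)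
qed

lemma lam_bounded: "bounded_op (lam g)"
  unfolding bounded_op_def
proof (intro conjI)
  show "\<forall>f\<in>l2. lam g f \<in> l2" by (intro ballI lam_l2(1))
  show "\<forall>f\<in>l2. \<forall>h\<in>l2. \<forall>c. lam g (\<lambda>x. f x + c * h x) = (\<lambda>x. lam g f x + c * lam g h x)"
    by (simp add: lam_def)
  show "\<exists>K. \<forall>f\<in>l2. l2_norm (lam g f) \<le> K * l2_norm f"
    by (rule exI[of _ 1]) (simp add: lam_l2(2))
qed

lemma lam_ok: "op_ok (lam g)" by (rule bounded_op_ok[OF lam_bounded])

lemma lam_norm: "op_norm (lam g) \<le> 1"
  unfolding op_norm_def
proof (rule cSup_least)
  have "l2_norm (lam g (\<lambda>x. 0)) \<in> {l2_norm (lam g f) |f. f \<in> l2 \<and> l2_norm f \<le> 1}"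
    by (rule CollectI, rule exI[of _ "\<lambda>x. 0"]) (simp add: zero_l2 zero_norm)
  then show "{l2_norm (lam g f) |f. f \<in> l2 \<and> l2_norm f \<le> 1} \<noteq> {}" by blast
  fix y assume "y \<in> {l2_norm (lam g f) |f. f \<in> l2 \<and> l2_norm f \<le> 1}"
  then obtain f where "f \<in> l2" "l2_norm f \<le> 1" "y = l2_norm (lam g f)" by blast
  then show "y \<le> 1" by (simp add: lam_l2(2))
qed

lemma op_norm_zero: "op_norm (\<lambda>(f::'g \<Rightarrow> complex) (x::'g). 0::complex) = 0"
proof -
  have a: "l2_norm (\<lambda>x::'g. 0::complex) \<in> {l2_norm ((\<lambda>(f::'g \<Rightarrow> complex) (x::'g). 0::complex) f) |f. f \<in> l2 \<and> l2_norm f \<le> 1}"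
    by (rule CollectI, rule exI[of _ "\<lambda>x. 0"]) (simp add: zero_l2 zero_norm)
  have "{l2_norm ((\<lambda>(f::'g \<Rightarrow> complex) (x::'g). 0::complex) f) |f. f \<in> l2 \<and> l2_norm f \<le> 1} = {0}"
    using a by (auto simp: zero_norm)
  then show ?thesis unfolding op_norm_def by simp
qed

lemma lam_Cr: "lam g \<in> Cr"
  unfolding Cr_def
proof (intro CollectI conjI allI impI)
  show "bounded_op (lam g)" by (rule lam_bounded)
  fix e :: real assume e: "e > 0"
  have "op_diff (lam g) (\<lambda>f x. \<Sum>t\<in>{g}. 1 * lam t f x) = (\<lambda>f x. 0)"
    by (simp add: op_diff_def)
  then show "\<exists>F c. finite F \<and> op_norm (op_diff (lam g) (\<lambda>f x. \<Sum>t\<in>F. c t * lam t f x)) < e"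
    using e by (intro exI[of _ "{g}"] exI[of _ "\<lambda>_. 1"]) (simp add: op_norm_zero)
qed

lemma u_T_entry: "u_T T s t = T (lam (s - t)) (delta t) s"
  by (simp add: u_T_def inner_delta)

lemma T_lam_bound:
  assumes "bounded_linear_Cr T"
  shows "\<exists>K\<ge>0. \<forall>g. op_ok (T (lam g)) \<and> op_norm (T (lam g)) \<le> K"
proof -
  obtain K where K: "\<forall>x\<in>Cr. op_norm (T x) \<le> K * op_norm x" and b: "\<forall>x\<in>Cr. bounded_op (T x)"
    using assms unfolding bounded_linear_Cr_def by blast
  have "op_ok (T (lam g)) \<and> op_norm (T (lam g)) \<le> max K 0" for g
  proof
    show "op_ok (T (lam g))" by (rule bounded_op_ok) (rule b[rule_format, OF lam_Cr])
    have "op_norm (T (lam g)) \<le> K * op_norm (lam g)" by (rule K[rule_format, OF lam_Cr])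
    also have "\<dots> \<le> max K 0 * op_norm (lam g)"
      by (rule mult_right_mono) (auto simp: op_norm_nonneg[OF lam_ok])
    also have "\<dots> \<le> max K 0 * 1" by (rule mult_left_mono) (auto simp: lam_norm)
    finally show "op_norm (T (lam g)) \<le> max K 0" by simp
  qed
  then show ?thesis by (intro exI[of _ "max K 0"]) auto
qed

lemma u_T_bounded:
  assumes "bounded_linear_Cr T" shows "bounded_fun2 (u_T T)"
proof -
  obtain K where K: "\<forall>g. op_ok (T (lam g)) \<and> op_norm (T (lam g)) \<le> K"
    using T_lam_bound[OF assms] by blast
  have "cmod (u_T T s t) \<le> K" for s t
    unfolding u_T_entry by (rule order_trans[OF entry_le]) (use K in auto)
  then show ?thesis unfolding bounded_fun2_def by blast
qed



lemma inner_summable: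
  assumes f: "f \<in> l2" and g: "g \<in> l2"
  shows "(\<lambda>x. cnj (f x) * g x) summable_on UNIV"
proof -
  have sf: "(\<lambda>x. (cmod (f x))^2) summable_on UNIV" using f by (simp add: l2_def)
  have sg: "(\<lambda>x. (cmod (g x))^2) summable_on UNIV" using g by (simp add: l2_def)
  have sh: "(\<lambda>x. (cmod (f x))^2 + (cmod (g x))^2) summable_on UNIV"
    by (intro summable_on_add sf sg)
  have le: "cmod (f x) * cmod (g x) \<le> (cmod (f x))^2 + (cmod (g x))^2" for x
  proof -
    have h1: "0 \<le> (cmod (f x) - cmod (g x))^2" by simp
    have h2: "(cmod (f x) - cmod (g x))^2 = (cmod (f x))^2 + (cmod (g x))^2 - 2 * (cmod (f x) * cmod (g x))"
      by (simp add: power2_diff mult.assoc)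
    have h3: "0 \<le> cmod (f x) * cmod (g x)" by simp
    from h1 h2 h3 show ?thesis by linarith
  qed
  have "(\<lambda>x. cmod (f x) * cmod (g x)) summable_on UNIV"
    by (rule nonneg_summable_le[OF sh]) (auto simp: le)
  then have "(\<lambda>x. norm (cnj (f x) * g x)) summable_on UNIV" by (simp add: norm_mult)
  then show ?thesis using summable_on_iff_abs_summable_on_complex by blast
qed

lemma infsum_finsum:
  fixes h :: "'i \<Rightarrow> 'a \<Rightarrow> complex"
  assumes "finite I" "\<And>i. i \<in> I \<Longrightarrow> h i summable_on A"
  shows "(\<lambda>x. \<Sum>i\<in>I. h i x) summable_on A \<and> infsum (\<lambda>x. \<Sum>i\<in>I. h i x) A = (\<Sum>i\<in>I. infsum (h i) A)"
  using assms
proof (induction I rule: finite_induct)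
  case empty
  then show ?case by simp
next
  case (insert i I)
  then have s1: "h i summable_on A" and s2: "(\<lambda>x. \<Sum>i\<in>I. h i x) summable_on A"
    and e2: "infsum (\<lambda>x. \<Sum>i\<in>I. h i x) A = (\<Sum>i\<in>I. infsum (h i) A)" by auto
  have eq: "(\<lambda>x. \<Sum>i\<in>insert i I. h i x) = (\<lambda>x. h i x + (\<Sum>i\<in>I. h i x))"
    using insert.hyps by simp
  show ?case unfolding eq
    using summable_on_add[OF s1 s2] infsum_add[OF s1 s2] e2 insert.hyps by simp
qed

lemma inner_sum:
  fixes n m :: nat
  assumes F: "\<And>i. i < n \<Longrightarrow> F i \<in> l2" and G: "\<And>j. j < m \<Longrightarrow> G j \<in> l2"
  shows "l2_inner (\<lambda>x. \<Sum>i<n. F i x) (\<lambda>x. \<Sum>j<m. G j x) = (\<Sum>i<n. \<Sum>j<m. l2_inner (F i) (G j))"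
proof -
  have eq: "cnj (\<Sum>i<n. F i x) * (\<Sum>j<m. G j x) = (\<Sum>i<n. \<Sum>j<m. cnj (F i x) * G j x)" for x
    by (simp add: cnj_sum sum_product)
  have inner: "(\<lambda>x. \<Sum>j<m. cnj (F i x) * G j x) summable_on UNIV \<and>
      infsum (\<lambda>x. \<Sum>j<m. cnj (F i x) * G j x) UNIV = (\<Sum>j<m. l2_inner (F i) (G j))" if "i < n" for i
    unfolding l2_inner_def
    by (rule infsum_finsum) (simp_all add: inner_summable F G that)
  have "l2_inner (\<lambda>x. \<Sum>i<n. F i x) (\<lambda>x. \<Sum>j<m. G j x)
      = infsum (\<lambda>x. \<Sum>i<n. \<Sum>j<m. cnj (F i x) * G j x) UNIV"
    unfolding l2_inner_def eq ..
  also have "\<dots> = (\<Sum>i<n. infsum (\<lambda>x. \<Sum>j<m. cnj (F i x) * G j x) UNIV)"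
    using infsum_finsum[of "{..<n}" "\<lambda>i x. \<Sum>j<m. cnj (F i x) * G j x" UNIV] inner by auto
  also have "\<dots> = (\<Sum>i<n. \<Sum>j<m. l2_inner (F i) (G j))"
    using inner by (intro sum.cong) auto
  finally show ?thesis .
qed

lemma lam_adj: "l2_inner f (lam a h) = l2_inner (lam (-a) f) h"
proof -
  have "l2_inner f (lam a h) = infsum (\<lambda>x. cnj (f x) * h (-a + x)) UNIV"
    by (simp add: l2_inner_def lam_def)
  also have "\<dots> = infsum (\<lambda>y. cnj (f (a + y)) * h (-a + (a + y))) UNIV"
    by (rule shift_infsum[symmetric])
  also have "\<dots> = l2_inner (lam (-a) f) h"
    by (simp add: l2_inner_def lam_def add.assoc[symmetric])
  finally show ?thesis .
qed

lemma inner_self_nonneg: "cnonneg (l2_inner H H)"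
proof -
  have "l2_inner H H = infsum (\<lambda>x. complex_of_real ((cmod (H x))^2)) UNIV"
  proof -
    have "cnj z * z = complex_of_real ((cmod z)^2)" for z
      by (subst complex_norm_square) (rule mult.commute)
    then show ?thesis unfolding l2_inner_def by presburger
  qed
  also have "\<dots> = of_real (infsum (\<lambda>x. (cmod (H x))^2) UNIV)" by (rule infsum_of_real_gen)
  finally show ?thesis unfolding cnonneg_def by (simp add: infsum_nonneg)
qed

lemma lam_comp: "lam (a - b) f = lam a (lam (-b) f)"
proof -
  have e: "-(a - b) + x = - (- b) + (-a + x)" for x
    by (metis minus_diff_eq diff_conv_add_uminus add.assoc minus_minus)
  show ?thesis by (simp only: lam_def e)
qed

lemma lam_matrix_pos: "op_matrix_pos n (\<lambda>i j. lam (s i - s j))"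
  unfolding op_matrix_pos_def
proof (intro allI impI)
  fix \<xi> :: "nat \<Rightarrow> 'a \<Rightarrow> complex" assume xi: "\<forall>i<n. \<xi> i \<in> l2"
  define \<eta> where "\<eta> i = lam (- s i) (\<xi> i)" for i
  have eta: "\<eta> i \<in> l2" if "i < n" for i unfolding \<eta>_def by (rule lam_l2(1)) (use xi that in blast)
  have "(\<Sum>i<n. \<Sum>j<n. l2_inner (\<xi> i) (lam (s i - s j) (\<xi> j))) = (\<Sum>i<n. \<Sum>j<n. l2_inner (\<eta> i) (\<eta> j))"
    unfolding \<eta>_def by (simp add: lam_comp lam_adj)
  also have "\<dots> = l2_inner (\<lambda>x. \<Sum>i<n. \<eta> i x) (\<lambda>x. \<Sum>j<n. \<eta> j x)"
    by (rule inner_sum[symmetric]) (auto intro: eta)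
  finally show "cnonneg (\<Sum>i<n. \<Sum>j<n. l2_inner (\<xi> i) (lam (s i - s j) (\<xi> j)))"
    using inner_self_nonneg by simp
qed

lemma part_i:
  assumes bl: "bounded_linear_Cr T" and cp: "completely_positive T"
  shows "positive_definite (u_T T)"
  unfolding positive_definite_def
proof (intro allI)
  fix n and s :: "nat \<Rightarrow> 'a" and z :: "nat \<Rightarrow> complex"
  have bTa: "\<forall>x\<in>Cr. bounded_op (T x)" using bl unfolding bounded_linear_Cr_def by (rule conjunct1)
  have bT: "bounded_op (T (lam g))" for g by (rule bTa[rule_format, OF lam_Cr])
  have cpr: "\<forall>n x. (\<forall>i<n. \<forall>j<n. x i j \<in> Cr) \<and> op_matrix_pos n x \<longrightarrow> op_matrix_pos n (\<lambda>i j. T (x i j))"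
    using cp unfolding completely_positive_def .
  have cr: "\<forall>i<n. \<forall>j<n. lam (s i - s j) \<in> Cr" by (simp add: lam_Cr)
  have opm: "op_matrix_pos n (\<lambda>i j. T (lam (s i - s j)))"
    using cpr[rule_format, OF conjI[OF cr lam_matrix_pos]] .
  define \<xi> where "\<xi> i = (\<lambda>r. z i * delta (s i) r)" for i
  have xl: "\<xi> i \<in> l2" for i unfolding \<xi>_def by (rule fin_supp_l2[where s="s i"]) (simp add: delta_def)
  have opm2: "\<forall>\<xi>. (\<forall>i<n. \<xi> i \<in> l2) \<longrightarrow> cnonneg (\<Sum>i<n. \<Sum>j<n. l2_inner (\<xi> i) (T (lam (s i - s j)) (\<xi> j)))"
    using opm unfolding op_matrix_pos_def .
  have pos: "cnonneg (\<Sum>i<n. \<Sum>j<n. l2_inner (\<xi> i) (T (lam (s i - s j)) (\<xi> j)))"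
    using opm2[rule_format, of \<xi>] xl by simp
  have "l2_inner (\<xi> i) (T (lam (s i - s j)) (\<xi> j)) = cnj (z i) * u_T T (s i) (s j) * z j" for i j
  proof -
    have "T (lam (s i - s j)) (\<xi> j) = (\<lambda>r. z j * T (lam (s i - s j)) (delta (s j)) r)"
      unfolding \<xi>_def by (rule bounded_op_scale[OF bT delta_l2])
    then show ?thesis unfolding \<xi>_def inner_sdelta u_T_entry by simp
  qed
  then show "cnonneg (\<Sum>i<n. \<Sum>j<n. cnj (z i) * u_T T (s i) (s j) * z j)" using pos by simp
qed



lemma wl_exists:
  assumes "generating_set S"
  shows "\<exists>xs. length xs = word_length S g \<and> set xs \<subseteq> S \<and> sum_list xs = g"
proof -
  obtain xs where xs: "set xs \<subseteq> S" "sum_list xs = g" using assms unfolding generating_set_def by blast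
  have "\<exists>ys. length ys = length xs \<and> set ys \<subseteq> S \<and> sum_list ys = g" using xs by blast
  then show ?thesis unfolding word_length_def by (rule LeastI)
qed

lemma ball_finite:
  assumes gen: "generating_set S"
  shows "finite {g. word_length S g \<le> n}"
proof -
  have fS: "finite S" using gen unfolding generating_set_def by blast
  have "{g. word_length S g \<le> n} \<subseteq> sum_list ` {xs. set xs \<subseteq> S \<and> length xs \<le> n}"
  proof
    fix g assume "g \<in> {g. word_length S g \<le> n}"
    then have le: "word_length S g \<le> n" by simp
    obtain xs where "length xs = word_length S g" "set xs \<subseteq> S" "sum_list xs = g"
      using wl_exists[OF gen] by blast
    then show "g \<in> sum_list ` {xs. set xs \<subseteq> S \<and> length xs \<le> n}" using le by force
  qed
  moreover have "finite (sum_list ` {xs. set xs \<subseteq> S \<and> length xs \<le> n})"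
    using finite_lists_length_le[OF fS] by blast
  ultimately show ?thesis by (rule finite_subset)
qed

lemma ball_finite_real:
  assumes gen: "generating_set S"
  shows "finite {g. real (word_length S g) \<le> R}"
proof -
  obtain N :: nat where N: "R \<le> real N" using real_arch_simple by blast
  have "{g. real (word_length S g) \<le> R} \<subseteq> {g. word_length S g \<le> N}"
  proof
    fix g assume "g \<in> {g. real (word_length S g) \<le> R}"
    then have "real (word_length S g) \<le> real N" using N by simp
    then show "g \<in> {g. word_length S g \<le> N}" by simp
  qed
  then show ?thesis using ball_finite[OF gen] by (rule finite_subset)
qed

lemma dir_ub:
  assumes dir: "directed_set le" and fin: "finite A"
  shows "\<exists>b. \<forall>a\<in>A. le (h a) b"
  using fin
proof (induction A rule: finite_induct)
  case empty
  then show ?case by simp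
next
  case (insert x A)
  then obtain b where b: "\<forall>a\<in>A. le (h a) b" by blast
  obtain c where c: "le b c" "le (h x) c" using dir unfolding directed_set_def by blast
  have tr: "\<And>a b c. le a b \<Longrightarrow> le b c \<Longrightarrow> le a c" using dir unfolding directed_set_def by blast
  have "\<forall>a\<in>insert x A. le (h a) c"
  proof
    fix a assume "a \<in> insert x A"
    then show "le (h a) c"
    proof
      assume "a = x" then show ?thesis using c by simp
    next
      assume "a \<in> A" then show ?thesis using b c tr by blast
    qed
  qed
  then show ?case by blast
qed

lemma lam_delta: "lam (s - t) (delta t) s = 1"
  by (simp add: lam_def delta_def minus_diff_eq)

lemma part_iii:
  assumes gen: "generating_set S" and dir: "directed_set le"
    and bl: "\<forall>a. bounded_linear_Cr (Tn a)"
    and conv: "\<forall>x\<in>Cr. \<forall>\<epsilon>>0. \<exists>a0. \<forall>a. le a0 a \<longrightarrow> op_norm (op_diff (Tn a x) x) < \<epsilon>"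
  shows "\<forall>R>0. \<forall>\<epsilon>>0. \<exists>a0. \<forall>a. le a0 a \<longrightarrow>
              (\<forall>s t. real (word_dist S s t) < R \<longrightarrow> cmod (u_T (Tn a) s t - 1) < \<epsilon>)"
proof (intro allI impI)
  fix R \<epsilon> :: real assume R: "R > 0" and e: "\<epsilon> > 0"
  let ?G = "{g. real (word_length S g) \<le> R}"
  have fG: "finite ?G" by (rule ball_finite_real[OF gen])
  have "\<forall>g. \<exists>a0. \<forall>a. le a0 a \<longrightarrow> op_norm (op_diff (Tn a (lam g)) (lam g)) < \<epsilon>"
  proof
    fix g show "\<exists>a0. \<forall>a. le a0 a \<longrightarrow> op_norm (op_diff (Tn a (lam g)) (lam g)) < \<epsilon>"
      using conv[rule_format, OF lam_Cr e] .
  qed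
  then obtain h where h: "\<And>g a. le (h g) a \<Longrightarrow> op_norm (op_diff (Tn a (lam g)) (lam g)) < \<epsilon>"
    by metis
  obtain b where b: "\<forall>g\<in>?G. le (h g) b" using dir_ub[OF dir fG] by blast
  have tr: "\<And>a b c. le a b \<Longrightarrow> le b c \<Longrightarrow> le a c" using dir unfolding directed_set_def by blast
  show "\<exists>a0. \<forall>a. le a0 a \<longrightarrow> (\<forall>s t. real (word_dist S s t) < R \<longrightarrow> cmod (u_T (Tn a) s t - 1) < \<epsilon>)"
  proof (intro exI[of _ b] allI impI)
    fix a s t assume ba: "le b a" and d: "real (word_dist S s t) < R"
    have "s - t \<in> ?G" using d unfolding word_dist_def by simp
    then have hl: "le (h (s - t)) a" using b ba tr by blast
    have bTa: "\<forall>x\<in>Cr. bounded_op (Tn a x)" using bl unfolding bounded_linear_Cr_def by blast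
    have ok: "op_ok (op_diff (Tn a (lam (s - t))) (lam (s - t)))"
      by (rule op_ok_diff[OF bounded_op_ok[OF bTa[rule_format, OF lam_Cr]] lam_ok])
    have "u_T (Tn a) s t - 1 = op_diff (Tn a (lam (s - t))) (lam (s - t)) (delta t) s"
      by (simp add: u_T_entry op_diff_def lam_delta)
    then have "cmod (u_T (Tn a) s t - 1) \<le> op_norm (op_diff (Tn a (lam (s - t))) (lam (s - t)))"
      using entry_le[OF ok] by simp
    also have "\<dots> < \<epsilon>" by (rule h[OF hl])
    finally show "cmod (u_T (Tn a) s t - 1) < \<epsilon>" .
  qed
qed



definition small_at :: "('x \<Rightarrow> real) \<Rightarrow> ('x \<Rightarrow> complex) \<Rightarrow> bool" where
  "small_at \<rho> f \<longleftrightarrow> (\<forall>\<epsilon>>0. \<exists>R. \<forall>x. \<rho> x > R \<longrightarrow> cmod (f x) < \<epsilon>)"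

definition bddf :: "('x \<Rightarrow> complex) \<Rightarrow> bool" where
  "bddf f \<longleftrightarrow> (\<exists>B. \<forall>x. cmod (f x) \<le> B)"

definition inspan :: "nat \<Rightarrow> (nat \<Rightarrow> 'x \<Rightarrow> complex) \<Rightarrow> ('x \<Rightarrow> complex) \<Rightarrow> bool" where
  "inspan k E f \<longleftrightarrow> (\<exists>c. \<forall>x. f x = (\<Sum>i<k. c i * E i x))"

lemma small_lin:
  assumes f: "small_at \<rho> f" and g: "small_at \<rho> g"
  shows "small_at \<rho> (\<lambda>x. f x + c * g x)"
  unfolding small_at_def
proof (intro allI impI)
  fix \<epsilon> :: real assume e: "\<epsilon> > 0"
  have e1: "\<epsilon> / 2 > 0" using e by simp
  have p0: "0 < cmod c + 1" using norm_ge_zero[of c] by linarith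
  have p: "0 < 2 * (cmod c + 1)" using p0 by simp
  have q: "cmod c + 1 \<noteq> 0" using norm_ge_zero[of c] by linarith
  have e2: "\<epsilon> / (2 * (cmod c + 1)) > 0" by (rule divide_pos_pos[OF e p])
  obtain R1 where R1: "\<forall>x. \<rho> x > R1 \<longrightarrow> cmod (f x) < \<epsilon> / 2"
    using f e1 unfolding small_at_def by blast
  obtain R2 where R2: "\<forall>x. \<rho> x > R2 \<longrightarrow> cmod (g x) < \<epsilon> / (2 * (cmod c + 1))"
    using g e2 unfolding small_at_def by blast
  show "\<exists>R. \<forall>x. \<rho> x > R \<longrightarrow> cmod (f x + c * g x) < \<epsilon>"
  proof (intro exI[of _ "max R1 R2"] allI impI)
    fix x assume "\<rho> x > max R1 R2"
    then have a: "cmod (f x) < \<epsilon> / 2" and b: "cmod (g x) < \<epsilon> / (2 * (cmod c + 1))"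
      using R1 R2 by auto
    have "cmod c * cmod (g x) \<le> (cmod c + 1) * cmod (g x)" by (simp add: mult_right_mono)
    also have "\<dots> \<le> (cmod c + 1) * (\<epsilon> / (2 * (cmod c + 1)))"
      using b by (intro mult_left_mono) auto
    also have "\<dots> = \<epsilon> / 2" using q by (simp add: field_simps)
    finally have c: "cmod c * cmod (g x) \<le> \<epsilon> / 2" .
    have "cmod (f x + c * g x) \<le> cmod (f x) + cmod c * cmod (g x)"
      using norm_triangle_ineq[of "f x" "c * g x"] by (simp add: norm_mult)
    then show "cmod (f x + c * g x) < \<epsilon>" using a c by linarith
  qed
qed

lemma bdd_lin:
  assumes f: "bddf f" and g: "bddf g"
  shows "bddf (\<lambda>x. f x + c * g x)"
proof -
  obtain B1 where B1: "\<forall>x. cmod (f x) \<le> B1" using f unfolding bddf_def by blast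
  obtain B2 where B2: "\<forall>x. cmod (g x) \<le> B2" using g unfolding bddf_def by blast
  have "cmod (f x + c * g x) \<le> B1 + cmod c * B2" for x
  proof -
    have "cmod (f x + c * g x) \<le> cmod (f x) + cmod c * cmod (g x)"
      using norm_triangle_ineq[of "f x" "c * g x"] by (simp add: norm_mult)
    also have "\<dots> \<le> B1 + cmod c * B2"
      using B1 B2 by (intro add_mono mult_left_mono) auto
    finally show ?thesis .
  qed
  then show ?thesis unfolding bddf_def by blast
qed

lemma small_zero: "small_at \<rho> (\<lambda>x. 0)" unfolding small_at_def by auto
lemma bdd_zero: "bddf (\<lambda>x. 0)" unfolding bddf_def by auto

lemma span_algebra:
  fixes c a :: "nat \<Rightarrow> complex" and E :: "nat \<Rightarrow> 'x \<Rightarrow> complex"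
  assumes fr: "\<And>y. f y = (\<Sum>i<Suc m. c i * E i y)"
    and f1r: "\<And>y. f1 y = (\<Sum>i<Suc m. a i * E i y)"
    and am: "a m \<noteq> 0" and f1p: "f1 p0 = 1"
  shows "f y - f p0 * f1 y = (\<Sum>i<m. (c i - c m * a i / a m) * (E i y - E i p0 * f1 y))"
proof -
  define S where "S y = (\<Sum>i<m. (c i - c m * a i / a m) * E i y)" for y
  have S_eq: "S y = (\<Sum>i<m. c i * E i y) - c m / a m * (\<Sum>i<m. a i * E i y)" for y
  proof -
    have "S y = (\<Sum>i<m. c i * E i y - c m / a m * (a i * E i y))"
      unfolding S_def by (rule sum.cong) (simp_all add: field_simps am)
    then show ?thesis by (simp add: sum_subtractf sum_distrib_left)
  qed
  have one: "f y = S y + c m / a m * f1 y" for y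
  proof -
    have "f y = (\<Sum>i<m. c i * E i y) + c m * E m y" using fr by simp
    moreover have "f1 y = (\<Sum>i<m. a i * E i y) + a m * E m y" using f1r by simp
    ultimately show ?thesis unfolding S_eq using am by (simp add: field_simps)
  qed
  have two: "(\<Sum>i<m. (c i - c m * a i / a m) * (E i y - E i p0 * f1 y)) = S y - S p0 * f1 y"
    unfolding S_def by (simp add: right_diff_distrib sum_subtractf sum_distrib_right mult.assoc)
  show ?thesis unfolding two using one[of y] one[of p0] f1p by (simp add: algebra_simps)
qed



lemma key_fd:
  fixes \<rho> :: "'x \<Rightarrow> real" and E :: "nat \<Rightarrow> 'x \<Rightarrow> complex"
  assumes "\<epsilon> > 0"
  shows "\<exists>R. \<forall>f. small_at \<rho> f \<and> bddf f \<and> inspan k E f \<and> (\<forall>x. cmod (f x) \<le> K)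
             \<longrightarrow> (\<forall>x. \<rho> x > R \<longrightarrow> cmod (f x) < \<epsilon>)"
  using assms
proof (induction k arbitrary: E K \<epsilon>)
  case 0
  show ?case
  proof (intro exI[of _ 0] allI impI)
    fix f x assume "small_at \<rho> f \<and> bddf f \<and> inspan 0 E f \<and> (\<forall>x. cmod (f x) \<le> K)"
    then have "f x = 0" unfolding inspan_def by auto
    then show "cmod (f x) < \<epsilon>" using "0.prems" by simp
  qed
next
  case (Suc m)
  note e = Suc.prems
  show ?case
  proof (cases "\<forall>f. small_at \<rho> f \<and> bddf f \<and> inspan (Suc m) E f \<longrightarrow> inspan m E f")
    case True
    obtain R where R: "\<forall>f. small_at \<rho> f \<and> bddf f \<and> inspan m E f \<and> (\<forall>x. cmod (f x) \<le> K)
             \<longrightarrow> (\<forall>x. \<rho> x > R \<longrightarrow> cmod (f x) < \<epsilon>)" using Suc.IH[OF e] by blast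
    show ?thesis
      by (rule exI[of _ R]) (use R True in blast)
  next
    case False
    then obtain f0 where f0s: "small_at \<rho> f0" and f0b: "bddf f0" and f0sp: "inspan (Suc m) E f0"
      and f0n: "\<not> inspan m E f0" by blast
    obtain a where a: "\<And>x. f0 x = (\<Sum>i<Suc m. a i * E i x)" using f0sp unfolding inspan_def by blast
    have am: "a m \<noteq> 0"
    proof
      assume "a m = 0"
      then have "\<forall>x. f0 x = (\<Sum>i<m. a i * E i x)" using a by simp
      then show False using f0n unfolding inspan_def by blast
    qed
    obtain p0 where p0: "f0 p0 \<noteq> 0"
    proof -
      have "\<not> (\<forall>x. f0 x = 0)"
      proof
        assume "\<forall>x. f0 x = 0"
        then have "inspan m E f0" unfolding inspan_def by (intro exI[of _ "\<lambda>_. 0"]) simp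
        then show False using f0n by blast
      qed
      then show ?thesis using that by blast
    qed
    define f1 where "f1 x = 0 + (1 / f0 p0) * f0 x" for x
    have f1s: "small_at \<rho> f1" unfolding f1_def by (rule small_lin[OF small_zero f0s])
    have f1b: "bddf f1" unfolding f1_def by (rule bdd_lin[OF bdd_zero f0b])
    have f1p: "f1 p0 = 1" unfolding f1_def using p0 by simp
    define a' where "a' i = a i / f0 p0" for i
    have a'm: "a' m \<noteq> 0" unfolding a'_def using am p0 by simp
    have f1r: "f1 y = (\<Sum>i<Suc m. a' i * E i y)" for y
    proof -
      have "f1 y = (1 / f0 p0) * (\<Sum>i<Suc m. a i * E i y)" unfolding f1_def using a[of y] by simp
      also have "\<dots> = (\<Sum>i<Suc m. a' i * E i y)" unfolding a'_def sum_distrib_left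
        by (rule sum.cong) simp_all
      finally show ?thesis .
    qed
    obtain B1 where B1: "\<forall>x. cmod (f1 x) \<le> B1" using f1b unfolding bddf_def by blast
    define B where "B = max B1 0"
    have B: "cmod (f1 x) \<le> B" "0 \<le> B" for x using B1 unfolding B_def by (auto intro: le_max_iff_disj[THEN iffD2])
    define K0 where "K0 = max K 0"
    have K0: "0 \<le> K0" "K \<le> K0" unfolding K0_def by auto
    define E' where "E' i x = E i x - E i p0 * f1 x" for i x
    have e2: "\<epsilon> / 2 > 0" using e by simp
    obtain R1 where R1: "\<forall>f. small_at \<rho> f \<and> bddf f \<and> inspan m E' f \<and> (\<forall>x. cmod (f x) \<le> K0 * (1 + B))
             \<longrightarrow> (\<forall>x. \<rho> x > R1 \<longrightarrow> cmod (f x) < \<epsilon> / 2)" using Suc.IH[OF e2] by blast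
    have p: "0 < 2 * (K0 + 1)" using K0 by simp
    have e3: "\<epsilon> / (2 * (K0 + 1)) > 0" by (rule divide_pos_pos[OF e p])
    obtain R2 where R2: "\<forall>x. \<rho> x > R2 \<longrightarrow> cmod (f1 x) < \<epsilon> / (2 * (K0 + 1))"
      using f1s e3 unfolding small_at_def by blast
    show ?thesis
    proof (intro exI[of _ "max R1 R2"] allI impI)
      fix f x
      assume fa: "small_at \<rho> f \<and> bddf f \<and> inspan (Suc m) E f \<and> (\<forall>x. cmod (f x) \<le> K)"
        and x: "\<rho> x > max R1 R2"
      obtain c where c: "\<And>y. f y = (\<Sum>i<Suc m. c i * E i y)" using fa unfolding inspan_def by blast
      define f' where "f' y = f y + (- f p0) * f1 y" for y
      have f's: "small_at \<rho> f'" unfolding f'_def by (rule small_lin) (use fa f1s in auto)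
      have f'b: "bddf f'" unfolding f'_def by (rule bdd_lin) (use fa f1b in auto)
      have fK: "cmod (f y) \<le> K0" for y using fa K0 by (meson order_trans)
      have f'K: "cmod (f' y) \<le> K0 * (1 + B)" for y
      proof -
        have "cmod (f' y) \<le> cmod (f y) + cmod (f p0) * cmod (f1 y)"
          unfolding f'_def using norm_triangle_ineq[of "f y" "- f p0 * f1 y"] by (simp add: norm_mult)
        also have "\<dots> \<le> K0 + K0 * B"
          using fK B K0 by (intro add_mono mult_mono) auto
        finally show ?thesis by (simp add: algebra_simps)
      qed
      have f'sp: "inspan m E' f'"
        unfolding inspan_def
      proof (intro exI[of _ "\<lambda>i. c i - c m * a' i / a' m"] allI)
        fix y
        show "f' y = (\<Sum>i<m. (c i - c m * a' i / a' m) * E' i y)"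
          unfolding f'_def E'_def using span_algebra[of f c E m f1 a' p0 y, OF c f1r a'm f1p] by simp
      qed
      have f'x: "cmod (f' x) < \<epsilon> / 2" using R1 f's f'b f'sp f'K x by auto
      have f1x: "cmod (f1 x) < \<epsilon> / (2 * (K0 + 1))" using R2 x by auto
      have "f x = f' x + f p0 * f1 x" unfolding f'_def by simp
      then have "cmod (f x) \<le> cmod (f' x) + cmod (f p0) * cmod (f1 x)"
        using norm_triangle_ineq[of "f' x" "f p0 * f1 x"] by (simp add: norm_mult)
      also have "cmod (f p0) * cmod (f1 x) \<le> K0 * (\<epsilon> / (2 * (K0 + 1)))"
        using fK f1x K0 by (intro mult_mono) auto
      also have "K0 * (\<epsilon> / (2 * (K0 + 1))) \<le> \<epsilon> / 2"
      proof -
        have "K0 * (\<epsilon> / (2 * (K0 + 1))) = (\<epsilon> / 2) * (K0 / (K0 + 1))" using K0 by (simp add: field_simps)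
        also have "\<dots> \<le> (\<epsilon> / 2) * 1" using K0 e by (intro mult_left_mono) auto
        finally show ?thesis by simp
      qed
      finally show "cmod (f x) < \<epsilon>" using f'x by linarith
    qed
  qed
qed



lemma finsum_real:
  fixes h :: "'i \<Rightarrow> 'a \<Rightarrow> real"
  assumes "finite I" "\<And>i. i \<in> I \<Longrightarrow> h i summable_on A"
  shows "(\<lambda>x. \<Sum>i\<in>I. h i x) summable_on A \<and> infsum (\<lambda>x. \<Sum>i\<in>I. h i x) A = (\<Sum>i\<in>I. infsum (h i) A)"
  using assms
proof (induction I rule: finite_induct)
  case empty
  then show ?case by simp
next
  case (insert i I)
  then have s1: "h i summable_on A" and s2: "(\<lambda>x. \<Sum>i\<in>I. h i x) summable_on A"
    and e2: "infsum (\<lambda>x. \<Sum>i\<in>I. h i x) A = (\<Sum>i\<in>I. infsum (h i) A)" by auto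
  have eq: "(\<lambda>x. \<Sum>i\<in>insert i I. h i x) = (\<lambda>x. h i x + (\<Sum>i\<in>I. h i x))"
    using insert.hyps by simp
  show ?case unfolding eq
    using summable_on_add[OF s1 s2] infsum_add[OF s1 s2] e2 insert.hyps by simp
qed

lemma mat_op_rep:
  assumes gen: "generating_set S"
    and M0: "\<forall>s t. real (word_dist S s t) > R \<longrightarrow> M s t = 0"
  shows "mat_op M \<xi> s = (\<Sum>g\<in>{g. real (word_length S g) \<le> R}. M s (-g + s) * \<xi> (-g + s))"
proof -
  let ?G = "{g. real (word_length S g) \<le> R}"
  have fG: "finite ?G" by (rule ball_finite_real[OF gen])
  have inj: "inj_on (\<lambda>g. -g + s) ?G" by (rule inj_onI) simp
  have "mat_op M \<xi> s = infsum (\<lambda>r. M s r * \<xi> r) UNIV" by (simp add: mat_op_def)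
  also have "\<dots> = infsum (\<lambda>r. M s r * \<xi> r) ((\<lambda>g. -g + s) ` ?G)"
  proof (rule infsum_cong_neutral)
    fix r assume r: "r \<in> UNIV - (\<lambda>g. -g + s) ` ?G"
    show "M s r * \<xi> r = 0"
    proof (cases "real (word_dist S s r) > R")
      case True then show ?thesis using M0 by simp
    next
      case False
      then have "s - r \<in> ?G" unfolding word_dist_def by simp
      moreover have "r = -(s - r) + s" by (simp add: minus_diff_eq)
      ultimately have "r \<in> (\<lambda>g. -g + s) ` ?G" by blast
      then show ?thesis using r by blast
    qed
  qed auto
  also have "\<dots> = sum (\<lambda>r. M s r * \<xi> r) ((\<lambda>g. -g + s) ` ?G)"
    using fG by simp
  also have "\<dots> = (\<Sum>g\<in>?G. M s (-g + s) * \<xi> (-g + s))"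
    by (subst sum.reindex[OF inj]) simp
  finally show ?thesis .
qed

lemma mat_op_ok:
  assumes gen: "generating_set S"
    and MC: "\<forall>s t. cmod (M s t) \<le> C"
    and M0: "\<forall>s t. real (word_dist S s t) > R \<longrightarrow> M s t = 0"
  shows "op_ok (mat_op M)"
proof -
  let ?G = "{g. real (word_length S g) \<le> R}"
  define N where "N = real (card ?G)"
  have fG: "finite ?G" by (rule ball_finite_real[OF gen])
  have C0: "0 \<le> C" using MC norm_ge_zero order_trans by blast
  have N0: "0 \<le> N" unfolding N_def by simp
  have main: "mat_op M \<xi> \<in> l2 \<and> (l2_norm (mat_op M \<xi>))^2 \<le> C^2 * N * N * (l2_norm \<xi>)^2" if xi: "\<xi> \<in> l2" for \<xi>
  proof -
    define h where "h g s = (cmod (\<xi> (-g + s)))^2" for g s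
    have sx: "(\<lambda>x. (cmod (\<xi> x))^2) summable_on UNIV" using xi by (simp add: l2_def)
    have hs: "h g summable_on UNIV" for g
      unfolding h_def using shift_summable[of "\<lambda>x. (cmod (\<xi> x))^2" "-g"] sx by simp
    have hi: "infsum (h g) UNIV = (l2_norm \<xi>)^2" for g
      unfolding h_def l2_norm_sq using shift_infsum[of "\<lambda>x. (cmod (\<xi> x))^2" "-g"] by simp
    obtain sH: "(\<lambda>s. \<Sum>g\<in>?G. h g s) summable_on UNIV"
      and iH: "infsum (\<lambda>s. \<Sum>g\<in>?G. h g s) UNIV = (\<Sum>g\<in>?G. infsum (h g) UNIV)"
      using finsum_real[of ?G h UNIV, OF fG hs] by blast
    have pt: "(cmod (mat_op M \<xi> s))^2 \<le> C^2 * N * (\<Sum>g\<in>?G. h g s)" for s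
    proof -
      have "cmod (mat_op M \<xi> s) \<le> (\<Sum>g\<in>?G. cmod (M s (-g + s) * \<xi> (-g + s)))"
        unfolding mat_op_rep[OF gen M0] by (rule norm_sum)
      also have "\<dots> \<le> (\<Sum>g\<in>?G. C * cmod (\<xi> (-g + s)))"
        using MC by (intro sum_mono) (simp add: norm_mult mult_right_mono)
      also have "\<dots> = C * (\<Sum>g\<in>?G. cmod (\<xi> (-g + s)))" by (simp add: sum_distrib_left)
      finally have a: "cmod (mat_op M \<xi> s) \<le> C * (\<Sum>g\<in>?G. cmod (\<xi> (-g + s)))" .
      have "(cmod (mat_op M \<xi> s))^2 \<le> (C * (\<Sum>g\<in>?G. cmod (\<xi> (-g + s))))^2"
        by (rule power_mono[OF a]) simp
      also have "\<dots> = C^2 * (\<Sum>g\<in>?G. cmod (\<xi> (-g + s)))^2" by (simp add: power_mult_distrib)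
      also have "\<dots> \<le> C^2 * ((\<Sum>g\<in>?G. (cmod (\<xi> (-g + s)))^2) * N)"
        unfolding N_def by (rule mult_left_mono[OF sum_squared_le_sum_of_squares]) simp
      finally show ?thesis unfolding h_def by (simp add: algebra_simps)
    qed
    have sB: "(\<lambda>s. C^2 * N * (\<Sum>g\<in>?G. h g s)) summable_on UNIV"
      by (rule summable_on_cmult_right[OF sH])
    have sM: "(\<lambda>s. (cmod (mat_op M \<xi> s))^2) summable_on UNIV"
      by (rule nonneg_summable_le[OF sB]) (auto simp: pt)
    have "(l2_norm (mat_op M \<xi>))^2 = infsum (\<lambda>s. (cmod (mat_op M \<xi> s))^2) UNIV" by (rule l2_norm_sq)
    also have "\<dots> \<le> infsum (\<lambda>s. C^2 * N * (\<Sum>g\<in>?G. h g s)) UNIV"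
      by (rule infsum_mono[OF sM sB]) (simp add: pt)
    also have "\<dots> = C^2 * N * (\<Sum>g\<in>?G. infsum (h g) UNIV)"
      by (simp add: infsum_cmult_right[OF sH] iH)
    also have "\<dots> = C^2 * N * N * (l2_norm \<xi>)^2" by (simp add: hi N_def)
    finally show ?thesis using sM by (simp add: l2_def)
  qed
  have "l2_norm (mat_op M \<xi>) \<le> C * N" if "\<xi> \<in> l2" "l2_norm \<xi> \<le> 1" for \<xi>
  proof -
    have n1: "(l2_norm \<xi>)^2 \<le> 1" using that l2_norm_nonneg[of \<xi>] by (simp add: power_le_one)
    have "(l2_norm (mat_op M \<xi>))^2 \<le> C^2 * N * N * (l2_norm \<xi>)^2" using main that by blast
    also have "\<dots> \<le> C^2 * N * N * 1" using n1 C0 N0 by (intro mult_left_mono) auto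
    also have "\<dots> = (C * N)^2" by (simp add: power2_eq_square)
    finally have "(l2_norm (mat_op M \<xi>))^2 \<le> (C * N)^2" .
    then show ?thesis using C0 N0 by (simp add: power2_le_iff_abs_le)
  qed
  then show ?thesis unfolding op_ok_def using main by blast
qed



lemma part_ii:
  assumes gen: "generating_set S" and bl: "bounded_linear_Cr T"
    and fr: "finite_rank T" and uc: "\<forall>x\<in>Cr. T x \<in> UC S"
  shows "C0_Delta S (u_T T)"
proof -
  obtain k and B :: "nat \<Rightarrow> 'a op" where kB: "\<forall>x\<in>Cr. \<exists>c. \<forall>f\<in>l2. T x f = (\<lambda>z. \<Sum>i<k. c i * B i f z)"
    using fr unfolding finite_rank_def by blast
  obtain K where K: "\<forall>g. op_ok (T (lam g)) \<and> op_norm (T (lam g)) \<le> K"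
    using T_lam_bound[OF bl] by blast
  define \<rho> where "\<rho> p = real (word_dist S (fst p) (snd p))" for p :: "'a \<times> 'a"
  define E where "E i p = B i (delta (snd p)) (fst p)" for i and p :: "'a \<times> 'a"
  define F where "F g p = T (lam g) (delta (snd p)) (fst p)" for g and p :: "'a \<times> 'a"
  have Fb: "cmod (F g p) \<le> K" for g p
    unfolding F_def using entry_le[of "T (lam g)"] K order_trans by blast
  have Fbd: "bddf (F g)" for g unfolding bddf_def using Fb by blast
  have Fsp: "inspan k E (F g)" for g
  proof -
    obtain c where c: "\<forall>f\<in>l2. T (lam g) f = (\<lambda>z. \<Sum>i<k. c i * B i f z)"
      using kB[rule_format, OF lam_Cr] by blast
    have "F g p = (\<Sum>i<k. c i * E i p)" for p
      unfolding F_def E_def using c[rule_format, OF delta_l2] by simp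
    then show ?thesis unfolding inspan_def by blast
  qed
  have Fs: "small_at \<rho> (F g)" for g
    unfolding small_at_def
  proof (intro allI impI)
    fix \<epsilon> :: real assume e: "\<epsilon> > 0"
    have "T (lam g) \<in> UC S" using uc lam_Cr by blast
    then obtain M R C where MC: "\<forall>s t. cmod (M s t) \<le> C"
      and M0: "\<forall>s t. real (word_dist S s t) > R \<longrightarrow> M s t = 0"
      and Mn: "op_norm (op_diff (T (lam g)) (mat_op M)) < \<epsilon>"
      using e unfolding UC_def by blast
    have ok: "op_ok (op_diff (T (lam g)) (mat_op M))"
      by (rule op_ok_diff) (use K mat_op_ok[OF gen MC M0] in auto)
    show "\<exists>R. \<forall>x. \<rho> x > R \<longrightarrow> cmod (F g x) < \<epsilon>"
    proof (intro exI[of _ R] allI impI)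
      fix p assume p: "\<rho> p > R"
      then have "M (fst p) (snd p) = 0" using M0 unfolding \<rho>_def by blast
      then have "F g p = op_diff (T (lam g)) (mat_op M) (delta (snd p)) (fst p)"
        unfolding F_def op_diff_def by (simp add: mat_op_delta)
      then have "cmod (F g p) \<le> op_norm (op_diff (T (lam g)) (mat_op M))"
        using entry_le[OF ok] by simp
      then show "cmod (F g p) < \<epsilon>" using Mn by linarith
    qed
  qed
  have "\<exists>R>0. \<forall>s t. real (word_dist S s t) > R \<longrightarrow> cmod (u_T T s t) < \<epsilon>" if e: "\<epsilon> > 0" for \<epsilon>
  proof -
    obtain R where R: "\<forall>f. small_at \<rho> f \<and> bddf f \<and> inspan k E f \<and> (\<forall>x. cmod (f x) \<le> K)
             \<longrightarrow> (\<forall>x. \<rho> x > R \<longrightarrow> cmod (f x) < \<epsilon>)" using key_fd[OF e] by blast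
    show ?thesis
    proof (intro exI[of _ "max R 1"] conjI allI impI)
      show "0 < max R 1" by simp
      fix s t assume d: "real (word_dist S s t) > max R 1"
      have "\<rho> (s, t) > R" using d unfolding \<rho>_def by simp
      then have "cmod (F (s - t) (s, t)) < \<epsilon>" using R Fs Fbd Fsp Fb by blast
      then show "cmod (u_T T s t) < \<epsilon>" unfolding F_def u_T_entry by simp
    qed
  qed
  then show ?thesis unfolding C0_Delta_def using u_T_bounded[OF bl] by blast
qed

theorem mainTheorem4:
  fixes S :: "'g::group_add set"
    and T :: "'g op \<Rightarrow> 'g op"
    and le :: "'i \<Rightarrow> 'i \<Rightarrow> bool"
    and Tn :: "'i \<Rightarrow> 'g op \<Rightarrow> 'g op"
  assumes "generating_set S"
    and "bounded_linear_Cr T"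
  shows "bounded_fun2 (u_T T)
    \<and> (unital T \<and> completely_positive T \<longrightarrow> positive_definite (u_T T))
    \<and> (finite_rank T \<and> (\<forall>x\<in>Cr. T x \<in> UC S) \<longrightarrow> C0_Delta S (u_T T))
    \<and> (directed_set le \<and> (\<forall>a. bounded_linear_Cr (Tn a)) \<and>
        (\<forall>x\<in>Cr. \<forall>\<epsilon>>0. \<exists>a0. \<forall>a. le a0 a \<longrightarrow> op_norm (op_diff (Tn a x) x) < \<epsilon>)
       \<longrightarrow> (\<forall>R>0. \<forall>\<epsilon>>0. \<exists>a0. \<forall>a. le a0 a \<longrightarrow>
              (\<forall>s t. real (word_dist S s t) < R \<longrightarrow> cmod (u_T (Tn a) s t - 1) < \<epsilon>)))"
proof (intro conjI impI)
  show "bounded_fun2 (u_T T)" by (rule u_T_bounded[OF assms(2)])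
next
  assume "unital T \<and> completely_positive T"
  then show "positive_definite (u_T T)" using part_i[OF assms(2)] by blast
next
  assume "finite_rank T \<and> (\<forall>x\<in>Cr. T x \<in> UC S)"
  then show "C0_Delta S (u_T T)" using part_ii[OF assms(1,2)] by blast
next
  assume h: "directed_set le \<and> (\<forall>a. bounded_linear_Cr (Tn a)) \<and>
        (\<forall>x\<in>Cr. \<forall>\<epsilon>>0. \<exists>a0. \<forall>a. le a0 a \<longrightarrow> op_norm (op_diff (Tn a x) x) < \<epsilon>)"
  show "\<forall>R>0. \<forall>\<epsilon>>0. \<exists>a0. \<forall>a. le a0 a \<longrightarrow>
              (\<forall>s t. real (word_dist S s t) < R \<longrightarrow> cmod (u_T (Tn a) s t - 1) < \<epsilon>)"
    by (rule part_iii[OF assms(1)]) (use h in auto)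
qed


end
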